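(* Let $D=\sum_{\rho\in\Sigma}n_\rho D_\rho$ and $\Pi\subseteq\Sigma$. Then the set $C^{ss}_\Pi$ is nonempty if and only if the set $C^s_\Pi$ is nonempty.
   Context: $N\cong\mathbb{Z}^d$, $M=\operatorname{Hom}(N,\mathbb{Z})$, $M_\mathbb{R}=M\otimes\mathbb{R}$, $\sigma\subset N_\mathbb{R}$ a strongly convex rational polyhedral cone of dimension $d$, $\Sigma=\sigma(1)$ its set of rays with primitive generators $n(\rho)$, $(n_\rho)\in\mathbb{Z}^\Sigma$. $C^{ss}_\Pi=\{m\in M_\mathbb{R}:\langle m,n(\rho)\rangle<-n_\rho\ (\rho\in\Pi),\ \langle m,n(\rho)\rangle\ge-n_\rho\ (\rho\in\Sigma\setminus\Pi)\}$ and $C^s_\Pi$ is defined by the same inequalities with all inequalities strict ($>$ for $\rho\in\Sigma\setminus\Pi$). *)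

theory Defs
  imports "HOL-Analysis.Analysis"
begin

text \<open>N = Z^d is the lattice of integer points of real^'n (d = CARD('n));
  M_R is identified with real^'n via the standard inner product.\<close>

definition lattice_pts :: "(real^'n) set" where
  "lattice_pts = {x. \<forall>i. x $ i \<in> \<int>}"

definition conic_span :: "(real^'n) set \<Rightarrow> (real^'n) set" where
  "conic_span S = {(\<Sum>x\<in>S. c x *\<^sub>R x) | c. \<forall>x\<in>S. c x \<ge> 0}"

definition rational_polyhedral_cone :: "(real^'n) set \<Rightarrow> bool" where
  "rational_polyhedral_cone \<sigma> \<longleftrightarrow>
     (\<exists>S. finite S \<and> S \<subseteq> lattice_pts \<and> \<sigma> = conic_span S)"

definition strongly_convex :: "(real^'n) set \<Rightarrow> bool" where
  "strongly_convex \<sigma> \<longleftrightarrow> \<sigma> \<inter> uminus ` \<sigma> = {0}"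

definition rays :: "(real^'n) set \<Rightarrow> (real^'n) set set" where
  "rays \<sigma> = {\<rho>. \<rho> face_of \<sigma> \<and> aff_dim \<rho> = 1}"

definition prim_gen :: "(real^'n) set \<Rightarrow> real^'n" where
  "prim_gen \<rho> = (THE u. u \<in> \<rho> \<and> u \<in> lattice_pts \<and> u \<noteq> 0 \<and>
      (\<forall>v \<in> \<rho> \<inter> lattice_pts. \<exists>k::nat. v = real k *\<^sub>R u))"

definition C_ss :: "(real^'n) set \<Rightarrow> ((real^'n) set \<Rightarrow> int) \<Rightarrow> (real^'n) set set \<Rightarrow> (real^'n) set" where
  "C_ss \<sigma> nr Pi_set = {m. (\<forall>\<rho>\<in>Pi_set. m \<bullet> prim_gen \<rho> < - of_int (nr \<rho>)) \<and>
                      (\<forall>\<rho>\<in>rays \<sigma> - Pi_set. m \<bullet> prim_gen \<rho> \<ge> - of_int (nr \<rho>))}"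

definition C_s :: "(real^'n) set \<Rightarrow> ((real^'n) set \<Rightarrow> int) \<Rightarrow> (real^'n) set set \<Rightarrow> (real^'n) set" where
  "C_s \<sigma> nr Pi_set = {m. (\<forall>\<rho>\<in>Pi_set. m \<bullet> prim_gen \<rho> < - of_int (nr \<rho>)) \<and>
                      (\<forall>\<rho>\<in>rays \<sigma> - Pi_set. m \<bullet> prim_gen \<rho> > - of_int (nr \<rho>))}"

end

theory Submission
  imports Defs
begin

lemma cs_sub:
  assumes "finite S" "T \<subseteq> S" "\<forall>x\<in>T. c x \<ge> 0"
  shows "(\<Sum>x\<in>T. c x *\<^sub>R x) \<in> conic_span S"
proof -
  have "(\<Sum>x\<in>S. (if x \<in> T then c x else 0) *\<^sub>R x) = (\<Sum>x\<in>S. if x \<in> T then c x *\<^sub>R x else 0)"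
    by (rule sum.cong) auto
  also have "\<dots> = (\<Sum>x\<in>S \<inter> T. c x *\<^sub>R x)"
    using assms(1) by (simp add: sum.inter_restrict)
  also have "S \<inter> T = T" using assms(2) by auto
  finally show ?thesis unfolding conic_span_def using assms(3)
    by (intro CollectI exI[of _ "\<lambda>x. if x \<in> T then c x else 0"]) auto
qed

lemma cs_mem: "finite S \<Longrightarrow> s \<in> S \<Longrightarrow> s \<in> conic_span S"
  using cs_sub[of S "{s}" "\<lambda>_. 1"] by auto

lemma cs_conic: "conic (conic_span S)"
  unfolding conic_def conic_span_def
proof (intro allI impI)
  fix x and c :: real
  assume "x \<in> {\<Sum>x\<in>S. c x *\<^sub>R x |c. \<forall>x\<in>S. 0 \<le> c x}" "0 \<le> c"
  then obtain d where d: "x = (\<Sum>x\<in>S. d x *\<^sub>R x)" "\<forall>x\<in>S. 0 \<le> d x" by auto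
  have "c *\<^sub>R x = (\<Sum>y\<in>S. (c * d y) *\<^sub>R y)" unfolding d by (simp add: scaleR_sum_right)
  then show "c *\<^sub>R x \<in> {\<Sum>x\<in>S. c x *\<^sub>R x |c. \<forall>x\<in>S. 0 \<le> c x}"
    using d(2) \<open>0 \<le> c\<close> by (intro CollectI exI[of _ "\<lambda>y. c * d y"]) auto
qed

lemma ray_struct:
  assumes fin: "finite S" and sc: "strongly_convex (conic_span S)"
    and r: "\<rho> \<in> rays (conic_span S)"
  shows "\<exists>s\<in>S. s \<noteq> 0 \<and> \<rho> = {t *\<^sub>R s | t. t \<ge> 0}"
proof -
  let ?\<sigma> = "conic_span S"
  have F: "\<rho> face_of ?\<sigma>" and ad: "aff_dim \<rho> = 1" using r unfolding rays_def by auto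
  have cF: "conic \<rho>" using face_of_conic[OF cs_conic F] .
  have sub: "\<rho> \<subseteq> ?\<sigma>" using F face_of_imp_subset by blast
  have "\<rho> \<noteq> {}" using ad by auto
  have "\<exists>x\<in>\<rho>. x \<noteq> 0"
  proof (rule ccontr)
    assume "\<not> ?thesis"
    then have "\<rho> = {0}" using \<open>\<rho> \<noteq> {}\<close> by auto
    then show False using ad by simp
  qed
  then obtain x where x: "x \<in> \<rho>" "x \<noteq> 0" by blast
  then have "x \<in> ?\<sigma>" using sub by auto
  then obtain c where c: "x = (\<Sum>s\<in>S. c s *\<^sub>R s)" "\<forall>s\<in>S. 0 \<le> c s"
    unfolding conic_span_def by auto
  have "\<exists>s\<in>S. c s > 0 \<and> s \<noteq> 0"
  proof (rule ccontr)
    assume "\<not> ?thesis"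
    then have "\<forall>s\<in>S. c s *\<^sub>R s = 0" using c(2) by (metis order_le_less scaleR_eq_0_iff)
    then have "x = 0" unfolding c(1) by (intro sum.neutral) blast
    then show False using x by simp
  qed
  then obtain s1 where s1: "s1 \<in> S" "c s1 > 0" "s1 \<noteq> 0" by blast
  define y where "y = (\<Sum>s\<in>S-{s1}. c s *\<^sub>R s)"
  have y: "y \<in> ?\<sigma>" unfolding y_def using c(2) fin by (intro cs_sub) auto
  have xy: "x = c s1 *\<^sub>R s1 + y" unfolding c(1) y_def using fin s1(1) by (simp add: sum.remove)
  define a where "a = (2 * c s1) *\<^sub>R s1"
  define b where "b = (2::real) *\<^sub>R y"
  have aS: "a \<in> ?\<sigma>" unfolding a_def using cs_mem[OF fin s1(1)] s1(2)
    by (auto intro: conic_mul[OF cs_conic])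
  have bS: "b \<in> ?\<sigma>" unfolding b_def using y by (auto intro: conic_mul[OF cs_conic])
  have xab: "x = (1 - 1/2) *\<^sub>R a + (1/2::real) *\<^sub>R b" unfolding xy a_def b_def
    by (simp add: algebra_simps)
  have "a \<in> \<rho>"
  proof (cases "a = b")
    case True
    then show ?thesis using xab x(1) by (simp flip: scaleR_add_left)
  next
    case False
    then have "x \<in> open_segment a b" unfolding in_segment using xab
      by (intro conjI exI[of _ "1/2"]) auto
    then show ?thesis using face_ofD[OF F _ aS bS x(1)] by blast
  qed
  then have "(1 / (2 * c s1)) *\<^sub>R a \<in> \<rho>" using s1(2) by (intro conic_mul[OF cF]) auto
  then have s1r: "s1 \<in> \<rho>" unfolding a_def using s1(2) by simp
  have zr: "0 \<in> \<rho>" using conic_mul[OF cF s1r, of 0] by simp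
  have "affine hull {0, s1} \<subseteq> affine hull \<rho>" using zr s1r by (intro hull_mono) auto
  moreover have "aff_dim (affine hull {0, s1}) = aff_dim (affine hull \<rho>)"
    using ad s1(3) by simp
  ultimately have aeq: "affine hull {0, s1} = affine hull \<rho>"
    by (intro affine_dim_equal) auto
  have "\<rho> = {t *\<^sub>R s1 | t. t \<ge> 0}"
  proof (intro set_eqI iffI)
    fix z assume "z \<in> {t *\<^sub>R s1 |t. 0 \<le> t}"
    then obtain t where t: "z = t *\<^sub>R s1" "0 \<le> t" by blast
    then show "z \<in> \<rho>" using conic_mul[OF cF s1r t(2)] by simp
  next
    fix z assume z: "z \<in> \<rho>"
    have "z \<in> affine hull \<rho>" using z by (rule hull_inc)
    then have "z \<in> affine hull {0, s1}" using aeq by simp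
    then obtain v where v: "z = v *\<^sub>R s1" unfolding affine_hull_2 by auto
    show "z \<in> {t *\<^sub>R s1 |t. 0 \<le> t}"
    proof (cases "v \<ge> 0")
      case True then show ?thesis using v by auto
    next
      case False
      have zs: "z \<in> ?\<sigma>" using z sub by auto
      have "- 1 / v \<ge> 0" using False by simp
      then have "(- 1 / v) *\<^sub>R z \<in> ?\<sigma>" by (rule conic_mul[OF cs_conic zs])
      then have "- s1 \<in> ?\<sigma>" using False v by simp
      then have "s1 \<in> uminus ` ?\<sigma>" by (metis image_eqI minus_minus)
      moreover have "s1 \<in> ?\<sigma>" using cs_mem[OF fin s1(1)] .
      ultimately have "s1 \<in> {0}" using sc unfolding strongly_convex_def by blast
      then show ?thesis using s1(3) by simp
    qed
  qed
  then show ?thesis using s1 by blast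
qed


lemma lat_diff: "u \<in> lattice_pts \<Longrightarrow> v \<in> lattice_pts \<Longrightarrow> u - v \<in> lattice_pts"
  unfolding lattice_pts_def by (auto intro: Ints_diff)

lemma lat_scale: "v \<in> lattice_pts \<Longrightarrow> real k *\<^sub>R v \<in> lattice_pts"
  unfolding lattice_pts_def by (auto intro: Ints_mult)

lemma prim:
  fixes s :: "real^'n"
  assumes sL: "s \<in> lattice_pts" and s0: "s \<noteq> 0" and rho: "\<rho> = {t *\<^sub>R s | t. t \<ge> 0}"
  shows "\<exists>c>0. prim_gen \<rho> = c *\<^sub>R s"
proof -
  obtain i where i: "s $ i \<noteq> 0" using s0 by (metis vec_eq_iff zero_index)
  have "s $ i \<in> \<int>" using sL unfolding lattice_pts_def by auto
  then obtain z :: int where z: "s $ i = of_int z" by (auto elim: Ints_cases)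
  define a where "a = nat \<bar>z\<bar>"
  have a0: "a > 0" using i z unfolding a_def by auto
  have ra: "real a = \<bar>s $ i\<bar>" unfolding a_def z by simp
  define K where "K = {k::nat. 0 < k \<and> (real k / real a) *\<^sub>R s \<in> lattice_pts}"
  have "a \<in> K" unfolding K_def using a0 sL by simp
  define k0 where "k0 = (LEAST k. k \<in> K)"
  have k0K: "k0 \<in> K" unfolding k0_def using \<open>a \<in> K\<close> by (rule LeastI)
  have k0min: "\<And>k. k < k0 \<Longrightarrow> k \<notin> K" unfolding k0_def by (rule not_less_Least)
  have k00: "k0 > 0" using k0K unfolding K_def by auto
  define u where "u = (real k0 / real a) *\<^sub>R s"
  have uL: "u \<in> lattice_pts" using k0K unfolding K_def u_def by auto
  have ur: "u \<in> \<rho>" unfolding rho u_def by auto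
  have u0: "u \<noteq> 0" unfolding u_def using k00 a0 s0 by simp
  have key: "\<forall>v \<in> \<rho> \<inter> lattice_pts. \<exists>k::nat. v = real k *\<^sub>R u"
  proof
    fix v assume v: "v \<in> \<rho> \<inter> lattice_pts"
    then obtain t where t: "v = t *\<^sub>R s" "t \<ge> 0" unfolding rho by auto
    have "v $ i \<in> \<int>" using v unfolding lattice_pts_def by auto
    then obtain q :: int where q: "v $ i = of_int q" by (auto elim: Ints_cases)
    define j where "j = nat \<bar>q\<bar>"
    have "real j = \<bar>v $ i\<bar>" unfolding j_def q by simp
    also have "\<dots> = t * real a" unfolding ra t(1) using t(2) by (simp add: abs_mult)
    finally have tj: "t = real j / real a" using a0 by (simp add: field_simps)
    show "\<exists>k::nat. v = real k *\<^sub>R u"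
    proof (cases "j = 0")
      case True
      then show ?thesis using tj t by (intro exI[of _ 0]) simp
    next
      case False
      define q' where "q' = j div k0"
      define r where "r = j mod k0"
      have jr: "real j = real q' * real k0 + real r"
        unfolding q'_def r_def by (metis div_mult_mod_eq of_nat_add of_nat_mult)
      have "(real r / real a) *\<^sub>R s = v - real q' *\<^sub>R u"
        unfolding t(1) tj u_def jr by (simp add: add_divide_distrib scaleR_add_left algebra_simps)
      then have rL: "(real r / real a) *\<^sub>R s \<in> lattice_pts"
        using v uL by (simp add: lat_diff lat_scale)
      have "r < k0" unfolding r_def using k00 by simp
      then have "r \<notin> K" by (rule k0min)
      then have "r = 0" using rL unfolding K_def by auto
      then have "v = real q' *\<^sub>R u" unfolding t(1) tj u_def using jr a0
        by (simp add: field_simps)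
      then show ?thesis by blast
    qed
  qed
  have Pu: "u \<in> \<rho> \<and> u \<in> lattice_pts \<and> u \<noteq> 0 \<and> (\<forall>v \<in> \<rho> \<inter> lattice_pts. \<exists>k::nat. v = real k *\<^sub>R u)"
    using ur uL u0 key by blast
  have "prim_gen \<rho> = u"
    unfolding prim_gen_def
  proof (rule the_equality)
    show "u \<in> \<rho> \<and> u \<in> lattice_pts \<and> u \<noteq> 0 \<and> (\<forall>v \<in> \<rho> \<inter> lattice_pts. \<exists>k::nat. v = real k *\<^sub>R u)"
      by (rule Pu)
  next
    fix w assume w: "w \<in> \<rho> \<and> w \<in> lattice_pts \<and> w \<noteq> 0 \<and> (\<forall>v \<in> \<rho> \<inter> lattice_pts. \<exists>k::nat. v = real k *\<^sub>R w)"
    obtain k :: nat where k: "w = real k *\<^sub>R u" using key w by blast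
    obtain k' :: nat where k': "u = real k' *\<^sub>R w" using w ur uL by blast
    from k' have e: "u = real k' *\<^sub>R (real k *\<^sub>R u)" by (subst (asm) k)
    have "real k' * real k = 1" using e u0 by (metis scaleR_cancel_right scaleR_one scaleR_scaleR)
    then have "k' * k = 1" by (metis of_nat_1 of_nat_eq_iff of_nat_mult)
    then have "k = 1" by simp
    then show "w = u" using k by simp
  qed
  then show ?thesis unfolding u_def using k00 a0 by (intro exI[of _ "real k0 / real a"]) simp
qed

theorem mainTheorem5:
  fixes \<sigma> :: "(real^'n) set" and nr :: "(real^'n) set \<Rightarrow> int"
    and Pi_set :: "(real^'n) set set"
  assumes "rational_polyhedral_cone \<sigma>" and "strongly_convex \<sigma>"
    and "dim \<sigma> = CARD('n)"
    and "Pi_set \<subseteq> rays \<sigma>"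
  shows "C_ss \<sigma> nr Pi_set \<noteq> {} \<longleftrightarrow> C_s \<sigma> nr Pi_set \<noteq> {}"
proof -
  obtain S where S: "finite S" "S \<subseteq> lattice_pts" "\<sigma> = conic_span S"
    using assms(1) unfolding rational_polyhedral_cone_def by blast
  have sc: "strongly_convex (conic_span S)" using assms(2) S(3) by simp
  have rs: "\<And>\<rho>. \<rho> \<in> rays \<sigma> \<Longrightarrow> \<exists>s\<in>S. s \<noteq> 0 \<and> \<rho> = {t *\<^sub>R s | t. t \<ge> 0}"
    using ray_struct[OF S(1) sc] S(3) by simp
  have "rays \<sigma> \<subseteq> (\<lambda>s. {t *\<^sub>R s | t. t \<ge> 0}) ` S" using rs by blast
  then have fr: "finite (rays \<sigma>)" using S(1) finite_surj by blast
  have gen: "\<And>\<rho>. \<rho> \<in> rays \<sigma> \<Longrightarrow> \<exists>s\<in>S-{0}. \<exists>c>0. prim_gen \<rho> = c *\<^sub>R s"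
  proof -
    fix \<rho> assume "\<rho> \<in> rays \<sigma>"
    then obtain s where s: "s \<in> S" "s \<noteq> 0" "\<rho> = {t *\<^sub>R s | t. t \<ge> 0}" using rs by blast
    then show "\<exists>s\<in>S-{0}. \<exists>c>0. prim_gen \<rho> = c *\<^sub>R s"
      using prim[of s \<rho>] S(2) by blast
  qed
  have n0: "0 \<notin> convex hull (S - {0})"
  proof
    assume "0 \<in> convex hull (S - {0})"
    then obtain l where l: "\<forall>x\<in>S-{0}. 0 \<le> l x" "sum l (S-{0}) = 1" "(\<Sum>x\<in>S-{0}. l x *\<^sub>R x) = 0"
      using convex_hull_finite[of "S-{0}"] S(1) by auto
    have "\<exists>s\<in>S-{0}. l s > 0"
    proof (rule ccontr)
      assume "\<not> ?thesis"
      then have "\<forall>x\<in>S-{0}. l x = 0" using l(1) by force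
      then have "sum l (S-{0}) = 0" by simp
      then show False using l(2) by simp
    qed
    then obtain s where s: "s \<in> S-{0}" "l s > 0" by blast
    define Y where "Y = (\<Sum>x\<in>S-{0}-{s}. l x *\<^sub>R x)"
    have Y: "Y \<in> conic_span S" unfolding Y_def using S(1) l(1) by (intro cs_sub) auto
    have "l s *\<^sub>R s + Y = 0" unfolding Y_def using l(3) s(1) S(1)
      by (simp add: sum.remove)
    then have "Y = - (l s *\<^sub>R s)" by (simp add: eq_neg_iff_add_eq_0 add.commute)
    then have "- s = (1 / l s) *\<^sub>R Y" using s(2) by simp
    moreover have "(1 / l s) *\<^sub>R Y \<in> conic_span S"
      using s(2) by (intro conic_mul[OF cs_conic Y]) simp
    ultimately have "- s \<in> conic_span S" by simp
    then have "s \<in> uminus ` conic_span S" by (metis image_eqI minus_minus)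
    moreover have "s \<in> conic_span S" using cs_mem[OF S(1)] s(1) by blast
    ultimately have "s \<in> {0}" using sc unfolding strongly_convex_def by blast
    then show False using s(1) by simp
  qed
  have "finite (S - {0})" using S(1) by simp
  then have "closed (convex hull (S - {0}))"
    by (intro compact_imp_closed compact_convex_hull finite_imp_compact)
  from separating_hyperplane_closed_0[OF convex_convex_hull this n0]
  obtain w b where wb: "0 < b" "\<forall>x\<in>convex hull (S - {0}). inner w x > b"
    by blast
  have pos: "\<And>\<rho>. \<rho> \<in> rays \<sigma> \<Longrightarrow> w \<bullet> prim_gen \<rho> > 0"
  proof -
    fix \<rho> assume "\<rho> \<in> rays \<sigma>"
    then obtain s c where s: "s \<in> S-{0}" "c > 0" "prim_gen \<rho> = c *\<^sub>R s" using gen by blast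
    have "s \<in> convex hull (S - {0})" by (rule hull_inc[OF s(1)])
    then have "w \<bullet> s > b" using wb(2) by blast
    then have "w \<bullet> s > 0" using wb(1) by simp
    then show "w \<bullet> prim_gen \<rho> > 0" using s(2,3) by simp
  qed
  have fP: "finite Pi_set" using fr assms(4) finite_subset by blast
  show ?thesis
  proof
    assume "C_s \<sigma> nr Pi_set \<noteq> {}"
    then obtain m where "m \<in> C_s \<sigma> nr Pi_set" by blast
    then have "m \<in> C_ss \<sigma> nr Pi_set" unfolding C_s_def C_ss_def by (auto intro: less_imp_le)
    then show "C_ss \<sigma> nr Pi_set \<noteq> {}" by blast
  next
    assume "C_ss \<sigma> nr Pi_set \<noteq> {}"
    then obtain m where m: "m \<in> C_ss \<sigma> nr Pi_set" by blast
    define g :: "(real^'n) set \<Rightarrow> real^'n" where "g = prim_gen"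
    define \<epsilon> where "\<epsilon> = Min (insert (1::real) ((\<lambda>\<rho>. (- of_int (nr \<rho>) - m \<bullet> g \<rho>) / (2 * (w \<bullet> g \<rho>))) ` Pi_set))"
    have mP: "\<And>\<rho>. \<rho> \<in> Pi_set \<Longrightarrow> m \<bullet> g \<rho> < - of_int (nr \<rho>)" using m unfolding C_ss_def g_def by blast
    have mR: "\<And>\<rho>. \<rho> \<in> rays \<sigma> - Pi_set \<Longrightarrow> m \<bullet> g \<rho> \<ge> - of_int (nr \<rho>)" using m unfolding C_ss_def g_def by blast
    have posg: "\<And>\<rho>. \<rho> \<in> rays \<sigma> \<Longrightarrow> w \<bullet> g \<rho> > 0" using pos unfolding g_def by blast
    have e0: "\<epsilon> > 0" unfolding \<epsilon>_def using fP
    proof (subst Min_gr_iff)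
      show "\<forall>a\<in>insert 1 ((\<lambda>\<rho>. (- of_int (nr \<rho>) - m \<bullet> g \<rho>) / (2 * (w \<bullet> g \<rho>))) ` Pi_set). 0 < a"
        using mP posg assms(4) by (auto intro!: divide_pos_pos)
    qed auto
    have ele: "\<And>\<rho>. \<rho> \<in> Pi_set \<Longrightarrow> \<epsilon> \<le> (- of_int (nr \<rho>) - m \<bullet> g \<rho>) / (2 * (w \<bullet> g \<rho>))"
      unfolding \<epsilon>_def using fP by (intro Min_le) auto
    have "m + \<epsilon> *\<^sub>R w \<in> C_s \<sigma> nr Pi_set"
      unfolding C_s_def
    proof (intro CollectI conjI ballI)
      fix \<rho> assume r: "\<rho> \<in> Pi_set"
      have wg: "w \<bullet> g \<rho> > 0" using posg r assms(4) by blast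
      have "\<epsilon> * (w \<bullet> g \<rho>) \<le> (- of_int (nr \<rho>) - m \<bullet> g \<rho>) / (2 * (w \<bullet> g \<rho>)) * (w \<bullet> g \<rho>)"
        using ele[OF r] wg by (intro mult_right_mono) auto
      also have "\<dots> = (- of_int (nr \<rho>) - m \<bullet> g \<rho>) / 2" using wg by (simp add: field_simps)
      finally have "\<epsilon> * (w \<bullet> g \<rho>) \<le> (- of_int (nr \<rho>) - m \<bullet> g \<rho>) / 2" .
      then show "(m + \<epsilon> *\<^sub>R w) \<bullet> prim_gen \<rho> < - of_int (nr \<rho>)"
        using mP[OF r] unfolding g_def by (simp add: inner_add_left)
    next
      fix \<rho> assume r: "\<rho> \<in> rays \<sigma> - Pi_set"
      have wg: "w \<bullet> g \<rho> > 0" using posg r by blast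
      have "\<epsilon> * (w \<bullet> g \<rho>) > 0" using wg e0 by simp
      then show "(m + \<epsilon> *\<^sub>R w) \<bullet> prim_gen \<rho> > - of_int (nr \<rho>)"
        using mR[OF r] unfolding g_def by (simp add: inner_add_left)
    qed
    then show "C_s \<sigma> nr Pi_set \<noteq> {}" by blast
  qed
qed

end
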